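(* Let $p>1$. For $\beta>-1$, $\beta\ne0$, let $\eta_1(\beta)\in(0,1)$ be the root of $\eta^\beta=\dfrac{1}{1+\beta(\eta+1)}$ and $$\psi_0(\beta,\eta)=\dfrac{(1+\eta^{\beta+1})^{1/\beta}}{(1+\eta)^{(\beta+1)/\beta}}+\dfrac{(\beta+1)^{(\beta+1)/\beta}}{\beta}\left[\dfrac1{1+\eta^{\beta+1}}-\dfrac1{1+\eta}\right].$$ Then $$\max_{0\le\eta\le\eta_1(1/(p-1))}\psi_0\!\left(\frac1{p-1},\eta\right)=\max_{0\le\eta\le\eta_1(-1/p)}\psi_0\!\left(-\frac1p,\eta\right).$$ *)

theory Defs
  imports Complex_Main
begin

definition eta1 :: "real \<Rightarrow> real" where
  "eta1 \<beta> = (THE \<eta>. 0 < \<eta> \<and> \<eta> < 1 \<and>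
                  \<eta> powr \<beta> = 1 / (1 + \<beta> * (\<eta> + 1)))"

definition psi0 :: "real \<Rightarrow> real \<Rightarrow> real" where
  "psi0 \<beta> \<eta> =
     (1 + \<eta> powr (\<beta> + 1)) powr (1 / \<beta>) / (1 + \<eta>) powr ((\<beta> + 1) / \<beta>)
     + (\<beta> + 1) powr ((\<beta> + 1) / \<beta>) / \<beta>
       * (1 / (1 + \<eta> powr (\<beta> + 1)) - 1 / (1 + \<eta>))"

end

theory Submission
  imports Defs
begin

lemma psi_transform:
  fixes b x :: real
  assumes b: "b > 0" and x: "x \<ge> 0"
  shows "psi0 (- b / (b + 1)) (x powr (b + 1)) = psi0 b x"
proof (cases "x = 0")
  case True
  have "- b / (b + 1) + 1 \<noteq> 0" using b by (simp add: field_simps)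
  then show ?thesis using True b by (simp add: psi0_def)
next
  case False
  hence xp: "x > 0" using x by simp
  define c where "c = b + 1"
  have c: "c > 1" using b c_def by simp
  have e1: "- b / (b + 1) + 1 = 1 / c" using b c_def by (simp add: field_simps)
  have e2: "1 / (- b / (b + 1)) = - (c / b)" using b c_def by (simp add: field_simps)
  have e3: "(- b / (b + 1) + 1) / (- b / (b + 1)) = - (1 / b)" using b c_def by (simp add: field_simps)
  have e4: "(x powr (b+1)) powr (1 / c) = x" using xp b c_def by (simp add: powr_powr)
  have e5: "(1 / c) powr (- (1 / b)) = c powr (1/b)" using c
    by (simp add: powr_minus_divide powr_divide)
  have e6: "c powr ((b + 1) / b) = c powr (1/b) * c" using b c c_def
    by (simp add: add_divide_distrib powr_add)
  have pc: "c powr (1/b) > 0" using c by simp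
  have q1: "1 + x powr c > 0" using xp by (simp add: add_pos_nonneg)
  have q2: "1 + x > 0" using xp by simp
  have e3': "(1 / c) / (- b / (b + 1)) = - (1 / b)" using e1 e3 by simp
  have "psi0 (- b / (b + 1)) (x powr (b + 1))
     = (1 + x) powr (- (c / b)) / (1 + x powr c) powr (- (1 / b))
       + c powr (1/b) / (- b / c) * (1 / (1 + x) - 1 / (1 + x powr c))"
    unfolding psi0_def e1 unfolding e4 e2 e3' unfolding c_def[symmetric] e5 by simp
  also have "\<dots> = (1 + x powr c) powr (1 / b) / (1 + x) powr (c / b)
       + c powr (1/b) * c / b * (1 / (1 + x powr c) - 1 / (1 + x))"
  proof -
    have t1: "(1 + x) powr (- (c / b)) / (1 + x powr c) powr (- (1 / b)) = (1 + x powr c) powr (1 / b) / (1 + x) powr (c / b)"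
      using q1 q2 by (simp add: powr_minus divide_inverse mult.commute)
    have t2: "c powr (1/b) / (- b / c) * (1 / (1 + x) - 1 / (1 + x powr c)) = c powr (1/b) * c / b * (1 / (1 + x powr c) - 1 / (1 + x))"
    proof -
      have "c powr (1/b) / (- b / c) = - (c powr (1/b) * c / b)" using b c by (simp add: field_simps)
      thus ?thesis by (simp add: algebra_simps)
    qed
    show ?thesis using t1 t2 by simp
  qed
  also have "\<dots> = psi0 b x"
    unfolding psi0_def using e6 c_def by simp
  finally show ?thesis .
qed

lemma eta_eq_transform:
  fixes b x :: real
  assumes b: "b > 0" and x: "x > 0"
  shows "(x powr (b+1)) powr (- b / (b + 1)) = 1 / (1 + (- b / (b + 1)) * (x powr (b+1) + 1))
     \<longleftrightarrow> x powr b = 1 / (1 + b * (x + 1))"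
proof -
  have l: "(x powr (b+1)) powr (- b / (b + 1)) = 1 / x powr b"
    using b x by (simp add: powr_powr powr_minus_divide)
  have r: "1 / (1 + (- b / (b + 1)) * (x powr (b+1) + 1)) = (b+1) / (1 - b * x powr (b+1))"
    using b by (simp add: field_simps)
  have xb: "x powr (b+1) = x powr b * x" using x by (simp add: powr_add)
  have pb: "x powr b > 0" using x by simp
  show ?thesis
  proof
    assume h: "(x powr (b+1)) powr (- b / (b + 1)) = 1 / (1 + (- b / (b + 1)) * (x powr (b+1) + 1))"
    hence "1 / x powr b = (b+1) / (1 - b * x powr (b+1))" using l r by simp
    hence h2: "1 - b * x powr (b+1) = (b+1) * x powr b"
      using pb by (cases "1 - b * x powr (b+1) = 0") (auto simp: field_simps)
    hence "x powr b * (1 + b * (x + 1)) = 1" unfolding xb by (simp add: algebra_simps)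
    moreover have "1 + b * (x + 1) > 0" using b x by (simp add: add_pos_nonneg)
    ultimately show "x powr b = 1 / (1 + b * (x + 1))" by (simp add: field_simps)
  next
    assume h: "x powr b = 1 / (1 + b * (x + 1))"
    have pos: "1 + b * (x + 1) > 0" using b x by (simp add: add_pos_nonneg)
    hence "x powr b * (1 + b * (x + 1)) = 1" using h by simp
    hence h2: "1 - b * x powr (b+1) = (b+1) * x powr b" unfolding xb by (simp add: algebra_simps)
    hence "1 - b * x powr (b+1) > 0" using pb b by simp
    thus "(x powr (b+1)) powr (- b / (b + 1)) = 1 / (1 + (- b / (b + 1)) * (x powr (b+1) + 1))"
      unfolding l r using h2 pb by (simp add: field_simps)
  qed
qed

lemma root_unique:
  fixes b :: real
  assumes b: "b > 0"
  shows "\<exists>!x. 0 < x \<and> x < 1 \<and> x powr b = 1 / (1 + b * (x + 1))"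
proof -
  define g where "g x = x powr b * (1 + b * (x + 1))" for x :: real
  have iff: "x powr b = 1 / (1 + b * (x + 1)) \<longleftrightarrow> g x = 1" if "x > 0" for x
  proof -
    have "1 + b * (x + 1) > 0" using b that by (simp add: add_pos_nonneg)
    thus ?thesis unfolding g_def by (simp add: field_simps)
  qed
  have mono: "g x < g y" if "0 < x" "x < y" for x y
  proof -
    have "x powr b < y powr b" using powr_less_mono2[OF b] that by simp
    moreover have "1 + b * (x + 1) < 1 + b * (y + 1)" using b that by simp
    moreover have "0 < 1 + b * (x + 1)" using b that by (simp add: add_pos_nonneg)
    moreover have "0 < y powr b" using that by simp
    ultimately show ?thesis unfolding g_def by (intro mult_strict_mono) auto
  qed
  have cont: "continuous_on {0..1} g" unfolding g_def
    by (intro continuous_intros continuous_on_powr') (use b in auto)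
  have "g 0 \<le> 1" using b by (simp add: g_def)
  moreover have "1 \<le> g 1" using b by (simp add: g_def)
  ultimately obtain x where x: "0 \<le> x" "x \<le> 1" "g x = 1"
    using IVT'[of g 0 1 1, OF _ _ _ cont] by auto
  have "x \<noteq> 0" using x b by (auto simp: g_def)
  moreover have "x \<noteq> 1" using x b by (auto simp: g_def)
  ultimately have x': "0 < x" "x < 1" using x by auto
  show ?thesis
  proof (rule ex1I[of _ x])
    show "0 < x \<and> x < 1 \<and> x powr b = 1 / (1 + b * (x + 1))" using x' x iff by auto
  next
    fix y assume y: "0 < y \<and> y < 1 \<and> y powr b = 1 / (1 + b * (y + 1))"
    hence "g y = 1" using iff by auto
    show "y = x"
    proof (rule ccontr)
      assume "y \<noteq> x"
      hence "y < x \<or> x < y" by auto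
      thus False using mono x' y \<open>g y = 1\<close> x(3) by fastforce
    qed
  qed
qed

lemma eta1_props:
  fixes b :: real
  assumes b: "b > 0"
  shows "0 < eta1 b \<and> eta1 b < 1 \<and> eta1 b powr b = 1 / (1 + b * (eta1 b + 1))"
  unfolding eta1_def using theI'[OF root_unique[OF b]] .

lemma eta1_transform:
  fixes b :: real
  assumes b: "b > 0"
  shows "eta1 (- b / (b + 1)) = eta1 b powr (b + 1)"
proof -
  define e where "e = eta1 b"
  have e: "0 < e" "e < 1" "e powr b = 1 / (1 + b * (e + 1))" using eta1_props[OF b] e_def by auto
  have uq: "\<And>x. 0 < x \<and> x < 1 \<and> x powr b = 1 / (1 + b * (x + 1)) \<Longrightarrow> x = e"
    using root_unique[OF b] e by blast
  have b1: "b + 1 > 0" using b by simp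
  have ep: "0 < e powr (b+1)" using e by simp
  have e1: "e powr (b+1) < 1" using powr_less_mono2[OF b1, of e 1] e by simp
  show ?thesis unfolding e_def[symmetric] unfolding eta1_def
  proof (rule the1_equality)
    show "0 < e powr (b + 1) \<and> e powr (b + 1) < 1 \<and>
      (e powr (b + 1)) powr (- b / (b + 1)) = 1 / (1 + - b / (b + 1) * (e powr (b + 1) + 1))"
      using ep e1 eta_eq_transform[OF b e(1)] e(3) by simp
  next
    show "\<exists>!y. 0 < y \<and> y < 1 \<and> y powr (- b / (b + 1)) = 1 / (1 + - b / (b + 1) * (y + 1))"
    proof (rule ex1I[of _ "e powr (b+1)"])
      show "0 < e powr (b + 1) \<and> e powr (b + 1) < 1 \<and>
        (e powr (b + 1)) powr (- b / (b + 1)) = 1 / (1 + - b / (b + 1) * (e powr (b + 1) + 1))"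
        using ep e1 eta_eq_transform[OF b e(1)] e(3) by simp
    next
      fix y assume y: "0 < y \<and> y < 1 \<and> y powr (- b / (b + 1)) = 1 / (1 + - b / (b + 1) * (y + 1))"
      define x where "x = y powr (1 / (b + 1))"
      have xp: "0 < x" using y x_def by simp
      have xy: "x powr (b + 1) = y" using y b1 unfolding x_def by (simp add: powr_powr)
      have x1: "x < 1" using powr_less_mono2[of "1/(b+1)" y 1] y b1 x_def by simp
      have "x powr b = 1 / (1 + b * (x + 1))"
        using eta_eq_transform[OF b xp] y xy by simp
      hence "x = e" using uq xp x1 by blast
      thus "y = e powr (b + 1)" using xy by simp
    qed
  qed
qed

theorem corollary2p5:
  fixes p :: real
  assumes "p > 1"
  shows "Sup (psi0 (1 / (p - 1)) ` {0 .. eta1 (1 / (p - 1))})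
       = Sup (psi0 (- 1 / p) ` {0 .. eta1 (- 1 / p)})"
proof -
  define b where "b = 1 / (p - 1)"
  have b: "b > 0" using assms b_def by simp
  have b1: "b + 1 > 0" using b by simp
  have beq: "- 1 / p = - b / (b + 1)" using assms unfolding b_def by (simp add: field_simps)
  define e where "e = eta1 b"
  have e: "0 < e" using eta1_props[OF b] e_def by auto
  have img: "{0 .. e powr (b+1)} = (\<lambda>x. x powr (b+1)) ` {0..e}"
  proof
    show "(\<lambda>x. x powr (b+1)) ` {0..e} \<subseteq> {0 .. e powr (b+1)}"
      using powr_mono2[of "b+1"] b1 by auto
  next
    show "{0 .. e powr (b+1)} \<subseteq> (\<lambda>x. x powr (b+1)) ` {0..e}"
    proof
      fix y assume y: "y \<in> {0 .. e powr (b+1)}"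
      define x where "x = y powr (1 / (b + 1))"
      have "x powr (b + 1) = y"
      proof (cases "y = 0")
        case True thus ?thesis using b1 x_def by simp
      next
        case False thus ?thesis using y b1 unfolding x_def by (simp add: powr_powr)
      qed
      moreover have "x \<le> (e powr (b+1)) powr (1 / (b + 1))"
        unfolding x_def using y b1 by (intro powr_mono2) auto
      hence "x \<le> e" using e b1 by (simp add: powr_powr)
      moreover have "0 \<le> x" unfolding x_def by simp
      ultimately show "y \<in> (\<lambda>x. x powr (b+1)) ` {0..e}" by force
    qed
  qed
  have "psi0 (- b / (b + 1)) ` {0 .. eta1 (- b / (b + 1))} = psi0 b ` {0..e}"
    unfolding eta1_transform[OF b] e_def[symmetric] img image_image
    using psi_transform[OF b] e by (intro image_cong) auto
  thus ?thesis unfolding beq b_def[symmetric] e_def by simp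
qed

end
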